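(* Let $K=\{x\in[0,1]^n: g_\ell(x)\ge 0,\ \ell=1,\dots,m\}$ with affine $g_\ell$, $V=[n]$, $t>1$, $y\in\mathrm{La}^t(K)$, $k<t$ a positive integer and $S\subseteq V$ such that $y_I=0$ for every $I\in\mathcal P_{2t}(V)$ with $|I\cap S|\ge k$. Let $y'$ be the extension of $y$ (so $y'_I=y_I$ if $|I|\le 2t$ and $y'_I=0$ otherwise), and for $X\subseteq S$ let $z^X_I=\sum_{J:\,X\subseteq J\subseteq S}(-1)^{|J\setminus X|}y'_{I\cup J}$. Then for every $X\subseteq S$: (1) $z^X_\emptyset\ge 0$; (2) if $z^X_\emptyset=0$ then $z^X_I=0$ for every $I\subseteq V$ with $|I|\le 2t-2k$.
   Context: Notation: $\mathcal P_t(U)$ is the set of subsets of $U$ of size at most $t$. For a collection $\mathcal T$ of subsets and a vector $y$ indexed by subsets, $M_{\mathcal T}(y)$ is the symmetric matrix indexed by $\mathcal T$ with $(I,J)$-entry $y_{I\cup J}$. For an affine $g(x)=b+\sum_{j}a_jx_j$, $(g*y)_I=b\,y_I+\sum_j a_j y_{I\cup\{j\}}$. The $t$-th Lasserre lifted polytope $\mathrm{La}^t(K)$ of $K=\{x\in[0,1]^n:g_\ell(x)\ge0,\ \ell=1,\dots,m\}$ is the set of $y\in[0,1]^{\mathcal P_{2t}(V)}$ with $y_\emptyset=1$, $M_{\mathcal P_t(V)}(y)\succeq0$, and $M_{\mathcal P_{t-1}(V)}(g_\ell*y)\succeq0$ for all $\ell$. *)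

theory Defs
  imports Complex_Main
begin

text \<open>Ground set V = [n] = {1..n}; vectors indexed by subsets are functions nat set => real.\<close>

definition Pt :: "nat set \<Rightarrow> nat \<Rightarrow> nat set set" where
  "Pt U t = {I. I \<subseteq> U \<and> card I \<le> t}"

text \<open>Positive semidefiniteness of the symmetric matrix indexed by the finite set T
  with (I,J)-entry y (I \<union> J): its quadratic form is nonnegative.\<close>
definition moment_psd :: "nat set set \<Rightarrow> (nat set \<Rightarrow> real) \<Rightarrow> bool" where
  "moment_psd T y \<longleftrightarrow>
     (\<forall>v :: nat set \<Rightarrow> real. (\<Sum>I\<in>T. \<Sum>J\<in>T. v I * v J * y (I \<union> J)) \<ge> 0)"

text \<open>Affine function g(x) = b + sum_j a_j x_j represented by the pair (b, a).\<close>
definition shift :: "nat \<Rightarrow> real \<times> (nat \<Rightarrow> real) \<Rightarrow> (nat set \<Rightarrow> real) \<Rightarrow> nat set \<Rightarrow> real" where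
  "shift n g y I = fst g * y I + (\<Sum>j\<in>{1..n}. snd g j * y (I \<union> {j}))"

definition Lasserre :: "nat \<Rightarrow> nat \<Rightarrow> (nat \<Rightarrow> real \<times> (nat \<Rightarrow> real)) \<Rightarrow> nat \<Rightarrow> (nat set \<Rightarrow> real) \<Rightarrow> bool" where
  "Lasserre n m g t y \<longleftrightarrow>
     (\<forall>I\<in>Pt {1..n} (2*t). 0 \<le> y I \<and> y I \<le> 1) \<and>
     y {} = 1 \<and>
     moment_psd (Pt {1..n} t) y \<and>
     (\<forall>l\<in>{1..m}. moment_psd (Pt {1..n} (t - 1)) (shift n (g l) y))"

definition ext_vec :: "nat \<Rightarrow> (nat set \<Rightarrow> real) \<Rightarrow> nat set \<Rightarrow> real" where
  "ext_vec t y I = (if card I \<le> 2*t then y I else 0)"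

definition zvec :: "nat \<Rightarrow> (nat set \<Rightarrow> real) \<Rightarrow> nat set \<Rightarrow> nat set \<Rightarrow> nat set \<Rightarrow> real" where
  "zvec t y S X I = (\<Sum>J\<in>{J. X \<subseteq> J \<and> J \<subseteq> S}. (-1) ^ card (J - X) * ext_vec t y (I \<union> J))"

end

theory Submission
  imports Defs
begin

definition Bf :: "nat set set \<Rightarrow> (nat set \<Rightarrow> real) \<Rightarrow> (nat set \<Rightarrow> real) \<Rightarrow> (nat set \<Rightarrow> real) \<Rightarrow> real" where
  "Bf T y a b = (\<Sum>K\<in>T. \<Sum>L\<in>T. a K * b L * y (K \<union> L))"

lemma Bf_sym: "Bf T y a b = Bf T y b a"
  unfolding Bf_def
  by (subst sum.swap) (simp add: Un_commute mult.commute mult.left_commute)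

lemma Bf_expand:
  "Bf T y (\<lambda>K. a K + c * b K) (\<lambda>K. a K + c * b K) =
     Bf T y a a + c * Bf T y a b + c * Bf T y b a + (c*c) * Bf T y b b"
proof -
  have "\<And>K L. (a K + c * b K) * (a L + c * b L) * y (K \<union> L) =
     a K * a L * y (K \<union> L) + c * (a K * b L * y (K \<union> L)) + c * (b K * a L * y (K \<union> L))
      + (c*c) * (b K * b L * y (K \<union> L))"
    by (simp add: algebra_simps)
  then show ?thesis unfolding Bf_def
    by (simp add: sum.distrib sum_distrib_left)
qed

lemma psd_zero:
  assumes psd: "moment_psd T y" and z: "Bf T y a a = 0"
  shows "Bf T y a b = 0"
proof -
  have pos: "\<And>v. Bf T y v v \<ge> 0" using psd unfolding moment_psd_def Bf_def by blast
  define \<beta> where "\<beta> = Bf T y a b"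
  define d where "d = Bf T y b b"
  have d0: "d \<ge> 0" using pos d_def by simp
  define c where "c = - \<beta> / (d + 1)"
  have "0 \<le> Bf T y (\<lambda>K. a K + c * b K) (\<lambda>K. a K + c * b K)" by (rule pos)
  also have "\<dots> = 2 * c * \<beta> + c*c*d"
    using Bf_expand[of T y a c b] z Bf_sym[of T y b a] unfolding \<beta>_def d_def by simp
  finally have h: "0 \<le> 2 * c * \<beta> + c*c*d" .
  have "0 \<le> (2 * c * \<beta> + c*c*d) * ((d+1)*(d+1))" using h d0 by simp
  also have "\<dots> = 2*\<beta>*(c*(d+1))*(d+1) + (c*(d+1))*(c*(d+1))*d"
    by (simp add: algebra_simps)
  also have "c*(d+1) = - \<beta>" unfolding c_def using d0 by simp
  also have "2*\<beta>*(- \<beta>)*(d+1) + (- \<beta>)*(- \<beta>)*d = - \<beta>*\<beta>*(d+2)"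
    by (simp add: algebra_simps)
  finally have "\<beta>*\<beta>*(d+2) \<le> 0" by simp
  moreover have "\<beta>*\<beta> \<ge> 0" by simp
  ultimately have "\<beta>*\<beta> = 0" using d0
  proof -
    have "d + 2 > 0" using d0 by simp
    then show ?thesis using \<open>\<beta>*\<beta>*(d+2) \<le> 0\<close> \<open>\<beta>*\<beta> \<ge> 0\<close>
      by (meson antisym mult_le_0_iff not_le)
  qed
  then show ?thesis unfolding \<beta>_def by simp
qed

lemma group_sum:
  fixes c h :: "'a \<Rightarrow> real"
  assumes "finite T" "finite F" "\<And>J. J \<in> F \<Longrightarrow> f J \<in> T"
  shows "(\<Sum>K\<in>T. (\<Sum>J\<in>F. if f J = K then c J else 0) * h K) = (\<Sum>J\<in>F. c J * h (f J))"
proof -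
  have "(\<Sum>K\<in>T. (\<Sum>J\<in>F. if f J = K then c J else 0) * h K)
     = (\<Sum>K\<in>T. \<Sum>J\<in>F. if f J = K then c J * h K else 0)"
    unfolding sum_distrib_right by (intro sum.cong refl) simp
  also have "\<dots> = (\<Sum>J\<in>F. \<Sum>K\<in>T. if f J = K then c J * h K else 0)"
    by (rule sum.swap)
  also have "\<dots> = (\<Sum>J\<in>F. c J * h (f J))"
    using assms by (simp add: sum.delta)
  finally show ?thesis .
qed

lemma split_set:
  assumes "finite I" "card I \<le> 2 * q"
  shows "\<exists>I1 I2. I = I1 \<union> I2 \<and> card I1 \<le> q \<and> card I2 \<le> q"
proof -
  obtain I1 where I1: "I1 \<subseteq> I" "card I1 = min q (card I)"
    using obtain_subset_with_card_n[of "min q (card I)" I] by auto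
  have "card (I - I1) = card I - card I1" using I1 assms(1) card_Diff_subset finite_subset by blast
  then have "card (I - I1) \<le> q" using I1 assms(2) by auto
  moreover have "I = I1 \<union> (I - I1)" using I1 by blast
  ultimately show ?thesis using I1 by (metis min.cobounded1)
qed


theorem mainTheorem8:
  fixes n m t k :: nat and g :: "nat \<Rightarrow> real \<times> (nat \<Rightarrow> real)"
    and y :: "nat set \<Rightarrow> real" and S :: "nat set"
  assumes "t > 1"
    and "Lasserre n m g t y"
    and "0 < k" and "k < t"
    and "S \<subseteq> {1..n}"
    and "\<forall>I\<in>Pt {1..n} (2*t). card (I \<inter> S) \<ge> k \<longrightarrow> y I = 0"
  shows "\<forall>X. X \<subseteq> S \<longrightarrow>
           zvec t y S X {} \<ge> 0 \<and>
           (zvec t y S X {} = 0 \<longrightarrow>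
              (\<forall>I. I \<subseteq> {1..n} \<and> card I \<le> 2*t - 2*k \<longrightarrow> zvec t y S X I = 0))"
proof (intro allI impI)
  fix X assume XS: "X \<subseteq> S"
  define T where "T = Pt {1..n} t"
  define Y where "Y = ext_vec t y"
  define s where "s = (\<lambda>J::nat set. (-1::real) ^ card (J - X))"
  define F where "F = {J. X \<subseteq> J \<and> J \<subseteq> S \<and> card J < k}"
  define G where "G = {J. X \<subseteq> J \<and> J \<subseteq> S}"
  define a where "a = (\<lambda>I K. \<Sum>J\<in>F. if I \<union> J = K then s J else 0)"
  have finS: "finite S" using assms(5) finite_subset by blast
  have finG: "finite G"
  proof -
    have "G \<subseteq> Pow S" unfolding G_def by blast
    then show ?thesis using finS finite_subset by blast
  qed
  have FG: "F \<subseteq> G" unfolding F_def G_def by blast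
  have finF: "finite F" using finG FG finite_subset by blast
  have finT: "finite T"
  proof -
    have "T \<subseteq> Pow {1..n}" unfolding T_def Pt_def by blast
    then show ?thesis using finite_subset by blast
  qed
  have psd: "moment_psd T y" using assms(2) unfolding Lasserre_def T_def by blast
  have zvec_G: "\<And>I. zvec t y S X I = (\<Sum>J\<in>G. s J * Y (I \<union> J))"
    unfolding zvec_def G_def s_def Y_def by simp
  have zero_big: "\<And>I J. I \<subseteq> {1..n} \<Longrightarrow> J \<in> G \<Longrightarrow> card J \<ge> k \<Longrightarrow> Y (I \<union> J) = 0"
  proof -
    fix I J assume I: "I \<subseteq> {1..n}" and J: "J \<in> G" and cJ: "card J \<ge> k"
    show "Y (I \<union> J) = 0"
    proof (cases "card (I \<union> J) \<le> 2*t")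
      case True
      have JS: "J \<subseteq> S" using J G_def by blast
      have "I \<union> J \<in> Pt {1..n} (2*t)" unfolding Pt_def using True I JS assms(5) by blast
      moreover have "card ((I \<union> J) \<inter> S) \<ge> k"
      proof -
        have "J \<subseteq> (I \<union> J) \<inter> S" using JS by blast
        moreover have "finite ((I \<union> J) \<inter> S)" using finS by blast
        ultimately have "card J \<le> card ((I \<union> J) \<inter> S)" by (rule card_mono[rotated])
        then show ?thesis using cJ by linarith
      qed
      ultimately have "y (I \<union> J) = 0" using assms(6) by blast
      then show ?thesis unfolding Y_def ext_vec_def by simp
    next
      case False
      then show ?thesis unfolding Y_def ext_vec_def by simp
    qed
  qed
  have zF: "\<And>I. I \<subseteq> {1..n} \<Longrightarrow> zvec t y S X I = (\<Sum>J\<in>F. s J * Y (I \<union> J))"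
  proof -
    fix I assume I: "I \<subseteq> {1..n}"
    have "(\<Sum>J\<in>F. s J * Y (I \<union> J)) = (\<Sum>J\<in>G. s J * Y (I \<union> J))"
    proof (rule sum.mono_neutral_left[OF finG FG], intro ballI)
      fix J assume "J \<in> G - F"
      then have "J \<in> G" "card J \<ge> k" unfolding F_def G_def by auto
      then show "s J * Y (I \<union> J) = 0" using zero_big I by simp
    qed
    then show "zvec t y S X I = (\<Sum>J\<in>F. s J * Y (I \<union> J))" using zvec_G by simp
  qed
  have cancel: "\<And>I i. i \<in> S \<Longrightarrow> i \<notin> X \<Longrightarrow> i \<in> I \<Longrightarrow> zvec t y S X I = 0"
  proof -
    fix I i assume iS: "i \<in> S" and iX: "i \<notin> X" and iI: "i \<in> I"
    define G0 where "G0 = {J\<in>G. i \<notin> J}"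
    define G1 where "G1 = {J\<in>G. i \<in> J}"
    have GU: "G = G0 \<union> G1" "G0 \<inter> G1 = {}" unfolding G0_def G1_def by auto
    have fin0: "finite G0" "finite G1" using finG unfolding G0_def G1_def by auto
    have G1im: "G1 = insert i ` G0"
    proof
      show "insert i ` G0 \<subseteq> G1" unfolding G0_def G1_def G_def using iS by auto
      show "G1 \<subseteq> insert i ` G0"
      proof
        fix J assume J: "J \<in> G1"
        then have "J - {i} \<in> G0" "J = insert i (J - {i})"
          unfolding G0_def G1_def G_def using iX by auto
        then show "J \<in> insert i ` G0" by blast
      qed
    qed
    have inj: "inj_on (insert i) G0" unfolding inj_on_def G0_def by (auto simp: insert_ident)
    have "(\<Sum>J\<in>G1. s J * Y (I \<union> J)) = (\<Sum>J\<in>G0. s (insert i J) * Y (I \<union> insert i J))"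
      unfolding G1im by (simp add: sum.reindex[OF inj])
    also have "\<dots> = (\<Sum>J\<in>G0. - (s J * Y (I \<union> J)))"
    proof (rule sum.cong[OF refl])
      fix J assume J: "J \<in> G0"
      then have "J \<subseteq> S" "i \<notin> J" unfolding G0_def G_def by auto
      then have fJ: "finite J" "i \<notin> J" using finS finite_subset by auto
      have "insert i J - X = insert i (J - X)" using iX by blast
      then have "card (insert i J - X) = Suc (card (J - X))" using fJ by simp
      then have "s (insert i J) = - s J" unfolding s_def by simp
      moreover have "I \<union> insert i J = I \<union> J" using iI by blast
      ultimately show "s (insert i J) * Y (I \<union> insert i J) = - (s J * Y (I \<union> J))" by simp
    qed
    finally have "(\<Sum>J\<in>G1. s J * Y (I \<union> J)) = - (\<Sum>J\<in>G0. s J * Y (I \<union> J))"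
      by (simp add: sum_negf)
    moreover have "zvec t y S X I = (\<Sum>J\<in>G0. s J * Y (I \<union> J)) + (\<Sum>J\<in>G1. s J * Y (I \<union> J))"
      using zvec_G GU fin0 by (simp add: sum.union_disjoint)
    ultimately show "zvec t y S X I = 0" by simp
  qed
  have zX: "\<And>I. zvec t y S X (I \<union> X) = zvec t y S X I"
  proof -
    fix I
    have "\<And>J. J \<in> G \<Longrightarrow> I \<union> X \<union> J = I \<union> J" unfolding G_def by blast
    then show "zvec t y S X (I \<union> X) = zvec t y S X I" using zvec_G by simp
  qed
  have collapse: "\<And>I. card X < k \<Longrightarrow>
      (\<Sum>J\<in>F. s J * zvec t y S X (I \<union> J)) = zvec t y S X I"
  proof -
    fix I assume cX: "card X < k"
    have XF: "X \<in> F" unfolding F_def using XS cX by blast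
    have "(\<Sum>J\<in>F. s J * zvec t y S X (I \<union> J)) =
          s X * zvec t y S X (I \<union> X) + (\<Sum>J\<in>F - {X}. s J * zvec t y S X (I \<union> J))"
      using sum.remove[OF finF XF] by simp
    also have "(\<Sum>J\<in>F - {X}. s J * zvec t y S X (I \<union> J)) = 0"
    proof (rule sum.neutral, intro ballI)
      fix J assume J: "J \<in> F - {X}"
      then obtain i where "i \<in> J" "i \<notin> X" "i \<in> S" unfolding F_def by blast
      then have "zvec t y S X (I \<union> J) = 0" using cancel by blast
      then show "s J * zvec t y S X (I \<union> J) = 0" by simp
    qed
    finally show "(\<Sum>J\<in>F. s J * zvec t y S X (I \<union> J)) = zvec t y S X I"
      using zX unfolding s_def by simp
  qed
  have inT: "\<And>I J. I \<subseteq> {1..n} \<Longrightarrow> card I + k \<le> t + 1 \<Longrightarrow> J \<in> F \<Longrightarrow> I \<union> J \<in> T"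
  proof -
    fix I J assume I: "I \<subseteq> {1..n}" and cI: "card I + k \<le> t + 1" and J: "J \<in> F"
    then have "J \<subseteq> {1..n}" "card J < k" unfolding F_def using assms(5) by auto
    moreover have "finite I" using I finite_subset by blast
    ultimately have "card (I \<union> J) \<le> t" using cI card_Un_le[of I J] by linarith
    then show "I \<union> J \<in> T" unfolding T_def Pt_def using I \<open>J \<subseteq> {1..n}\<close> by blast
  qed
  have Bval: "\<And>I1 I2. I1 \<subseteq> {1..n} \<Longrightarrow> I2 \<subseteq> {1..n} \<Longrightarrow> card I1 + k \<le> t + 1 \<Longrightarrow>
      card I2 + k \<le> t + 1 \<Longrightarrow> card X < k \<Longrightarrow> Bf T y (a I1) (a I2) = zvec t y S X (I1 \<union> I2)"
  proof -
    fix I1 I2 assume I1: "I1 \<subseteq> {1..n}" and I2: "I2 \<subseteq> {1..n}" and c1: "card I1 + k \<le> t + 1"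
      and c2: "card I2 + k \<le> t + 1" and cX: "card X < k"
    have "Bf T y (a I1) (a I2) = (\<Sum>K\<in>T. a I1 K * (\<Sum>L\<in>T. a I2 L * y (K \<union> L)))"
      unfolding Bf_def by (simp add: sum_distrib_left mult.assoc)
    also have "\<dots> = (\<Sum>J1\<in>F. s J1 * (\<Sum>L\<in>T. a I2 L * y (I1 \<union> J1 \<union> L)))"
      unfolding a_def
      by (rule group_sum[OF finT finF, where f="\<lambda>J. I1 \<union> J" and h="\<lambda>K. \<Sum>L\<in>T. a I2 L * y (K \<union> L)", unfolded a_def])
        (rule inT[OF I1 c1])
    also have "\<dots> = (\<Sum>J1\<in>F. s J1 * (\<Sum>J2\<in>F. s J2 * y (I1 \<union> J1 \<union> (I2 \<union> J2))))"
    proof (rule sum.cong[OF refl])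
      fix J1 assume "J1 \<in> F"
      have "(\<Sum>L\<in>T. a I2 L * y (I1 \<union> J1 \<union> L)) = (\<Sum>J2\<in>F. s J2 * y (I1 \<union> J1 \<union> (I2 \<union> J2)))"
        unfolding a_def
        by (rule group_sum[OF finT finF, where f="\<lambda>J. I2 \<union> J" and h="\<lambda>L. y (I1 \<union> J1 \<union> L)"])
          (rule inT[OF I2 c2])
      then show "s J1 * (\<Sum>L\<in>T. a I2 L * y (I1 \<union> J1 \<union> L)) =
          s J1 * (\<Sum>J2\<in>F. s J2 * y (I1 \<union> J1 \<union> (I2 \<union> J2)))" by simp
    qed
    also have "\<dots> = (\<Sum>J1\<in>F. s J1 * zvec t y S X (I1 \<union> I2 \<union> J1))"
    proof (rule sum.cong[OF refl])
      fix J1 assume J1: "J1 \<in> F"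
      have sub: "I1 \<union> I2 \<union> J1 \<subseteq> {1..n}" using I1 I2 J1 assms(5) unfolding F_def by blast
      have "(\<Sum>J2\<in>F. s J2 * y (I1 \<union> J1 \<union> (I2 \<union> J2))) = (\<Sum>J2\<in>F. s J2 * Y (I1 \<union> I2 \<union> J1 \<union> J2))"
      proof (rule sum.cong[OF refl])
        fix J2 assume J2: "J2 \<in> F"
        have a1: "I1 \<union> J1 \<in> T" "I2 \<union> J2 \<in> T" using inT I1 I2 c1 c2 J1 J2 by auto
        then have "card (I1 \<union> J1) \<le> t" "card (I2 \<union> J2) \<le> t" unfolding T_def Pt_def by auto
        then have "card (I1 \<union> J1 \<union> (I2 \<union> J2)) \<le> 2*t"
          using card_Un_le[of "I1 \<union> J1" "I2 \<union> J2"] by linarith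
        moreover have "I1 \<union> I2 \<union> J1 \<union> J2 = I1 \<union> J1 \<union> (I2 \<union> J2)" by blast
        ultimately show "s J2 * y (I1 \<union> J1 \<union> (I2 \<union> J2)) = s J2 * Y (I1 \<union> I2 \<union> J1 \<union> J2)"
          unfolding Y_def ext_vec_def by simp
      qed
      also have "\<dots> = zvec t y S X (I1 \<union> I2 \<union> J1)" using zF[OF sub] by simp
      finally show "s J1 * (\<Sum>J2\<in>F. s J2 * y (I1 \<union> J1 \<union> (I2 \<union> J2))) =
          s J1 * zvec t y S X (I1 \<union> I2 \<union> J1)" by simp
    qed
    also have "\<dots> = zvec t y S X (I1 \<union> I2)" by (rule collapse[OF cX])
    finally show "Bf T y (a I1) (a I2) = zvec t y S X (I1 \<union> I2)" .
  qed
  have pos: "\<And>v. Bf T y v v \<ge> 0" using psd unfolding moment_psd_def Bf_def by blast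
  show "zvec t y S X {} \<ge> 0 \<and>
           (zvec t y S X {} = 0 \<longrightarrow>
              (\<forall>I. I \<subseteq> {1..n} \<and> card I \<le> 2*t - 2*k \<longrightarrow> zvec t y S X I = 0))"
  proof (cases "card X < k")
    case False
    have "F = {}"
    proof -
      have "\<And>J. J \<in> F \<Longrightarrow> False"
      proof -
        fix J assume "J \<in> F"
        then have "X \<subseteq> J" "J \<subseteq> S" "card J < k" unfolding F_def by auto
        then have "card X \<le> card J" using finS by (meson card_mono finite_subset)
        then show False using False \<open>card J < k\<close> by linarith
      qed
      then show ?thesis by blast
    qed
    then have "\<And>I. I \<subseteq> {1..n} \<Longrightarrow> zvec t y S X I = 0" using zF by simp
    then show ?thesis by simp
  next
    case True
    have z0: "zvec t y S X {} = Bf T y (a {}) (a {})" using Bval[of "{}" "{}" , OF _ _ _ _ True] assms(4) by simp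
    show ?thesis
    proof (intro conjI impI allI)
      show "zvec t y S X {} \<ge> 0" using z0 pos by simp
    next
      fix I assume h0: "zvec t y S X {} = 0" and I: "I \<subseteq> {1..n} \<and> card I \<le> 2*t - 2*k"
      have Z1: "\<And>I1. I1 \<subseteq> {1..n} \<Longrightarrow> card I1 \<le> t - k \<Longrightarrow> zvec t y S X I1 = 0"
      proof -
        fix I1 assume i1: "I1 \<subseteq> {1..n}" "card I1 \<le> t - k"
        have c0: "card ({}::nat set) + k \<le> t + 1" using assms(4) by simp
        have c1: "card I1 + k \<le> t + 1" using assms(4) i1(2) by linarith
        have e0: "({}::nat set) \<subseteq> {1..n}" by simp
        have "Bf T y (a {}) (a I1) = zvec t y S X ({} \<union> I1)"
          by (rule Bval[OF e0 i1(1) c0 c1 True])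
        then have "Bf T y (a {}) (a I1) = zvec t y S X I1" by simp
        moreover have "Bf T y (a {}) (a I1) = 0" using psd_zero[OF psd] z0 h0 by simp
        ultimately show "zvec t y S X I1 = 0" by simp
      qed
      have "finite I" using I finite_subset by blast
      moreover have "card I \<le> 2 * (t - k)" using I by linarith
      ultimately obtain I1 I2 where sp: "I = I1 \<union> I2" "card I1 \<le> t - k" "card I2 \<le> t - k"
        using split_set[of I "t-k"] by metis
      have sub: "I1 \<subseteq> {1..n}" "I2 \<subseteq> {1..n}" using sp(1) I by auto
      have ck: "card I1 + k \<le> t + 1" "card I2 + k \<le> t + 1" using sp(2,3) assms(4) by linarith+
      have "Bf T y (a I1) (a I1) = zvec t y S X (I1 \<union> I1)" by (rule Bval[OF sub(1) sub(1) ck(1) ck(1) True])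
      also have "\<dots> = 0" using Z1[OF sub(1) sp(2)] by simp
      finally have "Bf T y (a I1) (a I2) = 0" using psd_zero[OF psd] by blast
      moreover have "Bf T y (a I1) (a I2) = zvec t y S X I" unfolding sp(1) by (rule Bval[OF sub ck True])
      ultimately show "zvec t y S X I = 0" by simp
    qed
  qed
qed

end
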